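(* For every integer $k\ge 2$, the complete multipartite graph $K_{1,2*(k-1),k-1}$ (with one part of size $1$, $k-1$ parts of size $2$, and one further part of size $k-1$) has m-number $k+1$.
   Context: All graphs are finite, simple and undirected. A list assignment $L$ for a graph $G$ assigns to each vertex $v$ a set $L(v)$ of colors; an $L$-coloring is a proper vertex coloring $c$ of $G$ with $c(v)\in L(v)$ for every vertex $v$. A $k$-list assignment is a list assignment with $|L(v)|=k$ for all $v$. $G$ is uniquely $k$-list colorable (U$k$LC) if there exists a $k$-list assignment $L$ such that $G$ has exactly one $L$-coloring. $G$ has property $M(k)$ if it is not U$k$LC, i.e. for every $k$-list assignment $L$, $G$ has either no $L$-coloring or at least two $L$-colorings. The m-number $m(G)$ is the least integer $k\ge 1$ such that $G$ has property $M(k)$. (Every U$k$LC graph is also U$(k-1)$LC, so $G$ is U$k$LC iff $k<m(G)$.) *)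

theory Defs
  imports Main
begin

text \<open>A graph is given by a vertex set V and an edge relation E (assumed symmetric
  and irreflexive for simple graphs). Colors are natural numbers.\<close>

definition L_coloring :: "'v set \<Rightarrow> ('v \<Rightarrow> 'v \<Rightarrow> bool) \<Rightarrow> ('v \<Rightarrow> nat set) \<Rightarrow> ('v \<Rightarrow> nat) \<Rightarrow> bool" where
  "L_coloring V E L c \<longleftrightarrow>
     (\<forall>v\<in>V. c v \<in> L v) \<and> (\<forall>u\<in>V. \<forall>v\<in>V. E u v \<longrightarrow> c u \<noteq> c v)"

definition k_list_assignment :: "'v set \<Rightarrow> ('v \<Rightarrow> nat set) \<Rightarrow> nat \<Rightarrow> bool" where
  "k_list_assignment V L k \<longleftrightarrow> (\<forall>v\<in>V. finite (L v) \<and> card (L v) = k)"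

definition unique_L_coloring :: "'v set \<Rightarrow> ('v \<Rightarrow> 'v \<Rightarrow> bool) \<Rightarrow> ('v \<Rightarrow> nat set) \<Rightarrow> bool" where
  "unique_L_coloring V E L \<longleftrightarrow>
     (\<exists>c. L_coloring V E L c \<and> (\<forall>c'. L_coloring V E L c' \<longrightarrow> (\<forall>v\<in>V. c' v = c v)))"

definition uniquely_k_list_colorable :: "'v set \<Rightarrow> ('v \<Rightarrow> 'v \<Rightarrow> bool) \<Rightarrow> nat \<Rightarrow> bool" where
  "uniquely_k_list_colorable V E k \<longleftrightarrow>
     (\<exists>L. k_list_assignment V L k \<and> unique_L_coloring V E L)"

definition property_M :: "'v set \<Rightarrow> ('v \<Rightarrow> 'v \<Rightarrow> bool) \<Rightarrow> nat \<Rightarrow> bool" where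
  "property_M V E k \<longleftrightarrow> \<not> uniquely_k_list_colorable V E k"

definition m_number :: "'v set \<Rightarrow> ('v \<Rightarrow> 'v \<Rightarrow> bool) \<Rightarrow> nat" where
  "m_number V E = (LEAST k. 1 \<le> k \<and> property_M V E k)"

text \<open>Complete multipartite graph with parts of the sizes listed in s:
  vertex (i,j) is the j-th vertex of part i; two vertices are adjacent iff in different parts.\<close>
definition cmp_V :: "nat list \<Rightarrow> (nat \<times> nat) set" where
  "cmp_V s = {(i, j). i < length s \<and> j < s ! i}"

definition cmp_E :: "nat list \<Rightarrow> nat \<times> nat \<Rightarrow> nat \<times> nat \<Rightarrow> bool" where
  "cmp_E s u v \<longleftrightarrow> fst u \<noteq> fst v"

definition K_parts :: "nat \<Rightarrow> nat list" where
  "K_parts k = [1] @ replicate (k - 1) 2 @ [k - 1]"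

end

theory Submission
  imports Defs
begin


lemma fix_subset:
  assumes "finite X" "X \<noteq> {}" "f ` X \<subseteq> X"
  shows "\<exists>Z\<subseteq>X. Z \<noteq> {} \<and> f ` Z = Z"
  using assms
proof (induction "card X" arbitrary: X rule: less_induct)
  case less
  show ?case
  proof (cases "f ` X = X")
    case True show ?thesis using less.prems True by (intro exI[of _ X]) simp
  next
    case False
    then have ps: "f ` X \<subset> X" using less.prems(3) by blast
    have a: "card (f ` X) < card X" using ps less.prems(1) by (meson psubset_card_mono)
    have b: "finite (f ` X)" using less.prems(1) by simp
    have cc: "f ` X \<noteq> {}" using less.prems(2) by simp
    have dd: "f ` (f ` X) \<subseteq> f ` X" using less.prems(3) by (simp add: image_mono)
    obtain Z where Z: "Z \<subseteq> f ` X" "Z \<noteq> {}" "f ` Z = Z"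
      using less.hyps[OF a b cc dd] by blast
    have "Z \<subseteq> X" using Z(1) ps by (rule order.trans[OF _ psubset_imp_subset])
    then show ?thesis using Z by (intro exI[of _ Z]) simp
  qed
qed

lemma uniq_lower:
  assumes fin: "finite V" and ne: "V \<noteq> {}" and kl: "k_list_assignment V L l"
    and u: "unique_L_coloring V E L"
  shows "3 * l \<le> card V + 2"
proof -
  from u obtain c where col: "L_coloring V E L c"
    and un: "\<And>c'. L_coloring V E L c' \<Longrightarrow> (\<forall>v\<in>V. c' v = c v)"
    by (auto simp: unique_L_coloring_def)
  have cin: "\<And>v. v \<in> V \<Longrightarrow> c v \<in> L v" using col by (simp add: L_coloring_def)
  have cpr: "\<And>u v. u \<in> V \<Longrightarrow> v \<in> V \<Longrightarrow> E u v \<Longrightarrow> c u \<noteq> c v"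
    using col by (simp add: L_coloring_def)
  define U where "U = c ` V"
  have finU: "finite U" using fin by (simp add: U_def)
  have sub: "L w \<subseteq> U" if w: "w \<in> V" for w
  proof (rule subsetI, rule ccontr)
    fix y assume y: "y \<in> L w" "y \<notin> U"
    define c' where "c' = c(w := y)"
    have "L_coloring V E L c'"
      unfolding L_coloring_def
    proof (intro conjI ballI impI)
      fix v assume "v \<in> V" then show "c' v \<in> L v" using y cin by (auto simp: c'_def)
    next
      fix u v assume uv: "u \<in> V" "v \<in> V" "E u v"
      show "c' u \<noteq> c' v"
      proof (cases "u = w")
        case True
        show ?thesis
        proof (cases "v = w")
          case True then show ?thesis using cpr uv \<open>u = w\<close> by blast
        next
          case False then show ?thesis using True y uv by (auto simp: c'_def U_def)
        qed
      next
        case False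
        show ?thesis
        proof (cases "v = w")
          case True then show ?thesis using False y uv by (auto simp: c'_def U_def)
        next
          case False then show ?thesis using \<open>u \<noteq> w\<close> cpr uv by (auto simp: c'_def)
        qed
      qed
    qed
    then have "c' w = c w" using un w by blast
    then show False using y w by (auto simp: c'_def U_def)
  qed
  have cardL: "\<And>v. v \<in> V \<Longrightarrow> finite (L v) \<and> card (L v) = l"
    using kl by (simp add: k_list_assignment_def)
  define m where "m = card U"
  define d where "d = m - l"
  obtain w0 where w0: "w0 \<in> V" using ne by blast
  have lm: "l \<le> m" using card_mono[OF finU sub[OF w0]] cardL[OF w0] by (simp add: m_def)
  have md: "m = l + d" using lm by (simp add: d_def)
  define S where "S x = {w\<in>V. c w = x}" for x
  define M where "M x = {y\<in>U. \<forall>w\<in>V. c w = x \<longrightarrow> y \<in> L w}" for x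
  have finS: "finite (S x)" for x using fin by (simp add: S_def)
  have xM: "x \<in> M x" if "x \<in> U" for x using that by (auto simp: M_def) (metis cin)
  have Mb: "card (U - M x) \<le> card (S x) * d" if "x \<in> U" for x
  proof -
    have "U - M x = (\<Union>w\<in>S x. U - L w)"
    proof
      show "U - M x \<subseteq> (\<Union>w\<in>S x. U - L w)"
      proof
        fix y assume "y \<in> U - M x"
        then obtain w where "w \<in> V" "c w = x" "y \<notin> L w" "y \<in> U" unfolding M_def by blast
        then show "y \<in> (\<Union>w\<in>S x. U - L w)" unfolding S_def by blast
      qed
      show "(\<Union>w\<in>S x. U - L w) \<subseteq> U - M x" unfolding M_def S_def by blast
    qed
    moreover have "card (\<Union>w\<in>S x. U - L w) \<le> (\<Sum>w\<in>S x. card (U - L w))"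
      by (rule card_UN_le[OF finS])
    ultimately have "card (U - M x) \<le> (\<Sum>w\<in>S x. card (U - L w))" by simp
    also have "\<dots> = (\<Sum>w\<in>S x. d)"
    proof (rule sum.cong)
      fix w assume "w \<in> S x"
      then have "w \<in> V" by (simp add: S_def)
      then show "card (U - L w) = d"
        using card_Diff_subset[of "L w" U] sub cardL by (simp add: m_def d_def)
    qed simp
    finally show ?thesis by simp
  qed
  have key3: "\<exists>x\<in>X. \<forall>y\<in>X. y \<in> M x \<longrightarrow> y = x" if X: "X \<subseteq> U" "X \<noteq> {}" for X
  proof (rule ccontr)
    assume "\<not> ?thesis"
    then have ex: "\<forall>x\<in>X. \<exists>y. y \<in> X \<and> y \<in> M x \<and> y \<noteq> x" by blast
    define f where "f x = (SOME y. y \<in> X \<and> y \<in> M x \<and> y \<noteq> x)" for x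
    have f: "f x \<in> X \<and> f x \<in> M x \<and> f x \<noteq> x" if "x \<in> X" for x
      unfolding f_def using someI_ex[OF ex[rule_format, OF that]] .
    have finX: "finite X" using X finU finite_subset by blast
    have fX: "f ` X \<subseteq> X" using f by blast
    obtain Z where Z: "Z \<subseteq> X" "Z \<noteq> {}" "f ` Z = Z"
      using fix_subset[OF finX X(2) fX] by blast
    have finZ: "finite Z" using Z(1) finX finite_subset by blast
    have injf: "inj_on f Z" using eq_card_imp_inj_on[OF finZ, of f] by (simp add: Z(3))
    define p where "p x = (if x \<in> Z then f x else x)" for x
    have injp: "inj_on p U"
    proof (rule inj_onI)
      fix x1 x2 assume "x1 \<in> U" "x2 \<in> U" "p x1 = p x2"
      note h = this
      have fZ: "\<And>x. x \<in> Z \<Longrightarrow> f x \<in> Z" by (metis Z(3) imageI)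
      show "x1 = x2"
      proof (cases "x1 \<in> Z"; cases "x2 \<in> Z")
        assume "x1 \<in> Z" "x2 \<in> Z" then show ?thesis using h injf by (simp add: p_def inj_on_def)
      next
        assume "x1 \<in> Z" "x2 \<notin> Z" then show ?thesis using h fZ[of x1] by (simp add: p_def)
      next
        assume "x1 \<notin> Z" "x2 \<in> Z" then show ?thesis using h fZ[of x2] by (simp add: p_def)
      next
        assume "x1 \<notin> Z" "x2 \<notin> Z" then show ?thesis using h by (simp add: p_def)
      qed
    qed
    define c' where "c' v = p (c v)" for v
    have "L_coloring V E L c'"
      unfolding L_coloring_def
    proof (intro conjI ballI impI)
      fix v assume v: "v \<in> V"
      show "c' v \<in> L v"
      proof (cases "c v \<in> Z")
        case True
        then have "f (c v) \<in> M (c v)" using f Z(1) by blast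
        then show ?thesis using True v by (simp add: c'_def p_def M_def)
      next
        case False then show ?thesis using cin v by (simp add: c'_def p_def)
      qed
    next
      fix u v assume uv: "u \<in> V" "v \<in> V" "E u v"
      then have "c u \<noteq> c v" using cpr by blast
      moreover have "c u \<in> U" "c v \<in> U" using uv by (auto simp: U_def)
      ultimately show "c' u \<noteq> c' v" using injp unfolding c'_def inj_on_def by blast
    qed
    then have eq: "\<forall>v\<in>V. c' v = c v" using un by blast
    obtain z where z: "z \<in> Z" using Z(2) by blast
    then have "z \<in> U" using Z(1) X(1) by blast
    then obtain v where v: "v \<in> V" "c v = z" by (auto simp: U_def)
    have "c' v = f z" using z v by (simp add: c'_def p_def)
    moreover have "f z \<noteq> z" using f z Z(1) by blast
    ultimately show False using eq v by simp
  qed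
  have key4: "card {x\<in>U. card (U - M x) \<le> e} \<le> e + 1" for e
  proof (cases "{x\<in>U. card (U - M x) \<le> e} = {}")
    case True show ?thesis unfolding True by simp
  next
    case False
    let ?Y = "{x\<in>U. card (U - M x) \<le> e}"
    obtain x where x: "x \<in> ?Y" "\<forall>y\<in>?Y. y \<in> M x \<longrightarrow> y = x"
      using key3[of ?Y] False by blast
    have "?Y - {x} \<subseteq> U - M x" using x by blast
    then have "card (?Y - {x}) \<le> card (U - M x)" using finU by (simp add: card_mono)
    also have "\<dots> \<le> e" using x by simp
    finally have "card (?Y - {x}) \<le> e" .
    moreover have "card (?Y - {x}) = card ?Y - 1" using x(1) finU by simp
    ultimately show ?thesis by simp
  qed
  have SV: "V = (\<Union>x\<in>U. S x)" by (auto simp: S_def U_def)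
  have cardV: "card V = (\<Sum>x\<in>U. card (S x))"
    unfolding SV by (rule card_UN_disjoint[OF finU]) (auto simp: S_def fin)
  have Spos: "card (S x) \<ge> 1" if xU: "x \<in> U" for x
  proof -
    obtain v where "v \<in> V" "c v = x" using xU by (auto simp: U_def)
    then have "S x \<noteq> {}" by (auto simp: S_def)
    then show ?thesis using finS[of x] by (simp add: Suc_le_eq card_gt_0_iff)
  qed
  define N1 where "N1 = {x\<in>U. card (S x) = 1}"
  define N2 where "N2 = {x\<in>U. card (S x) \<le> 2}"
  have N1b: "card N1 \<le> d + 1"
  proof -
    have "N1 \<subseteq> {x\<in>U. card (U - M x) \<le> d}" 
    proof
      fix x assume "x \<in> N1"
      then have "x \<in> U" "card (S x) = 1" by (auto simp: N1_def)
      then have "card (U - M x) \<le> d" using Mb[of x] by simp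
      then show "x \<in> {x\<in>U. card (U - M x) \<le> d}" using \<open>x \<in> U\<close> by simp
    qed
    then have "card N1 \<le> card {x\<in>U. card (U - M x) \<le> d}" using finU by (simp add: card_mono)
    then show ?thesis using key4[of d] by simp
  qed
  have N2b: "card N2 \<le> 2 * d + 1"
  proof -
    have "N2 \<subseteq> {x\<in>U. card (U - M x) \<le> 2 * d}"
    proof
      fix x assume "x \<in> N2"
      then have "x \<in> U" "card (S x) \<le> 2" by (auto simp: N2_def)
      then have "card (U - M x) \<le> 2 * d" using Mb[of x] mult_le_mono1[of "card (S x)" 2 d] by linarith
      then show "x \<in> {x\<in>U. card (U - M x) \<le> 2 * d}" using \<open>x \<in> U\<close> by simp
    qed
    then have "card N2 \<le> card {x\<in>U. card (U - M x) \<le> 2 * d}" using finU by (simp add: card_mono)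
    then show ?thesis using key4[of "2 * d"] by simp
  qed
  have ind: "(\<Sum>x\<in>U. if P x then 1 else 0) = card {x\<in>U. P x}" for P :: "nat \<Rightarrow> bool"
    using finU by (simp add: sum.If_cases Int_def conj_commute)
  have "(\<Sum>x\<in>U. (3::nat)) \<le> (\<Sum>x\<in>U. card (S x) + (if card (S x) = 1 then 1 else 0) + (if card (S x) \<le> 2 then 1 else 0))"
  proof (rule sum_mono)
    fix x assume "x \<in> U" then show "3 \<le> card (S x) + (if card (S x) = 1 then 1 else 0) + (if card (S x) \<le> 2 then 1 else 0)"
      using Spos[of x] by auto
  qed
  also have "\<dots> = card V + card N1 + card N2"
    by (simp add: sum.distrib cardV ind N1_def N2_def)
  finally have "3 * m \<le> card V + card N1 + card N2" by (simp add: m_def)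
  then show ?thesis using N1b N2b md by linarith
qed



lemma Kp_len: "k \<ge> 1 \<Longrightarrow> length (K_parts k) = k + 1"
  by (simp add: K_parts_def)

lemma Kp_nth: assumes "k \<ge> 1" "i \<le> k"
  shows "K_parts k ! i = (if i = 0 then 1 else if i < k then 2 else k - 1)"
proof (cases i)
  case 0 then show ?thesis by (simp add: K_parts_def)
next
  case (Suc i')
  then have "K_parts k ! i = (replicate (k - 1) 2 @ [k - 1]) ! i'" by (simp add: K_parts_def)
  also have "\<dots> = (if i' < k - 1 then 2 else k - 1)"
    using assms Suc by (simp add: nth_append)
  finally show ?thesis using Suc assms by auto
qed

lemma memV: assumes "k \<ge> 1"
  shows "(i, j) \<in> cmp_V (K_parts k) \<longleftrightarrow>
     i \<le> k \<and> j < (if i = 0 then 1 else if i < k then 2 else k - 1)"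
proof -
  have "(i, j) \<in> cmp_V (K_parts k) \<longleftrightarrow> i < k + 1 \<and> j < K_parts k ! i"
    using Kp_len[OF assms] by (simp add: cmp_V_def)
  also have "\<dots> \<longleftrightarrow> i \<le> k \<and> j < (if i = 0 then 1 else if i < k then 2 else k - 1)"
    using Kp_nth[OF assms] by (auto simp del: One_nat_def)
  finally show ?thesis .
qed

lemma cmpV_Sigma: "cmp_V s = Sigma {..<length s} (\<lambda>i. {..<s ! i})"
  by (auto simp: cmp_V_def)

lemma card_cmpV: "card (cmp_V s) = sum_list s" "finite (cmp_V s)"
proof -
  show "card (cmp_V s) = sum_list s"
    unfolding cmpV_Sigma by (simp add: card_SigmaI sum_list_sum_nth atLeast0LessThan)
  show "finite (cmp_V s)" unfolding cmpV_Sigma by auto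
qed

lemma card_KV: "k \<ge> 1 \<Longrightarrow> card (cmp_V (K_parts k)) = 3 * k - 2"
  by (simp add: card_cmpV K_parts_def sum_list_replicate)

definition L0 :: "nat \<Rightarrow> nat \<times> nat \<Rightarrow> nat set" where
  "L0 k v = (if fst v = k then insert (k + snd v) {1..<k}
             else if snd v = 0 then {..<k} else insert (fst v) {k..<2*k-1})"

definition c0 :: "nat \<Rightarrow> nat \<times> nat \<Rightarrow> nat" where
  "c0 k v = (if fst v = 0 then 0 else if fst v < k then fst v else k + snd v)"

lemma UkLC: assumes k: "k \<ge> 2"
  shows "uniquely_k_list_colorable (cmp_V (K_parts k)) (cmp_E (K_parts k)) k"
proof -
  let ?V = "cmp_V (K_parts k)" and ?E = "cmp_E (K_parts k)"
  have k1: "k \<ge> 1" using k by simp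
  have mem: "\<And>i j. (i, j) \<in> ?V \<longleftrightarrow> i \<le> k \<and> j < (if i = 0 then 1 else if i < k then 2 else k - 1)"
    using memV[OF k1] by blast
  have E: "\<And>u v. ?E u v \<longleftrightarrow> fst u \<noteq> fst v" by (simp add: cmp_E_def)
  have kl: "k_list_assignment ?V (L0 k) k"
    unfolding k_list_assignment_def
  proof
    fix v assume v: "v \<in> ?V"
    obtain i j where ij: "v = (i, j)" by (cases v)
    show "finite (L0 k v) \<and> card (L0 k v) = k"
    proof (cases "i = k")
      case True then show ?thesis using ij k by (simp add: L0_def)
    next
      case False
      show ?thesis
      proof (cases "j = 0")
        case True then show ?thesis using ij False by (simp add: L0_def)
      next
        case False
        have "i < k" using v ij mem \<open>i \<noteq> k\<close> by auto
        then show ?thesis using ij False \<open>i \<noteq> k\<close> k by (simp add: L0_def)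
      qed
    qed
  qed
  have col: "L_coloring ?V ?E (L0 k) (c0 k)"
    unfolding L_coloring_def
  proof (intro conjI ballI impI)
    fix v assume v: "v \<in> ?V"
    obtain i j where ij: "v = (i, j)" by (cases v)
    show "c0 k v \<in> L0 k v"
      using v ij mem[of i j] k by (auto simp: L0_def c0_def)
  next
    fix u v assume uv: "u \<in> ?V" "v \<in> ?V" "?E u v"
    obtain i j where ij: "u = (i, j)" by (cases u)
    obtain i' j' where ij': "v = (i', j')" by (cases v)
    show "c0 k u \<noteq> c0 k v"
      using uv ij ij' mem[of i j] mem[of i' j'] E by (auto simp: c0_def split: if_splits)
  qed
  have uniq: "\<forall>v\<in>?V. c' v = c0 k v" if c': "L_coloring ?V ?E (L0 k) c'" for c'
  proof -
    have cin: "\<And>v. v \<in> ?V \<Longrightarrow> c' v \<in> L0 k v" using c' by (simp add: L_coloring_def)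
    have cpr: "\<And>u v. u \<in> ?V \<Longrightarrow> v \<in> ?V \<Longrightarrow> fst u \<noteq> fst v \<Longrightarrow> c' u \<noteq> c' v"
      using c' E by (simp add: L_coloring_def)
    define T where "T = (\<lambda>i. (i, 0::nat)) ` {..<k}"
    have TV: "T \<subseteq> ?V" unfolding T_def using mem k by auto
    have injT: "inj_on c' T"
    proof (rule inj_onI)
      fix x y assume "x \<in> T" "y \<in> T" "c' x = c' y"
      note h = this
      obtain i1 where i1: "i1 < k" "x = (i1, 0)" using h(1) unfolding T_def by auto
      obtain i2 where i2: "i2 < k" "y = (i2, 0)" using h(2) unfolding T_def by auto
      have "i1 = i2"
      proof (rule ccontr)
        assume "i1 \<noteq> i2"
        then show False using cpr[of x y] h TV i1 i2 by auto
      qed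
      then show "x = y" using i1 i2 by simp
    qed
    have cT: "c' ` T \<subseteq> {..<k}"
    proof
      fix y assume "y \<in> c' ` T"
      then obtain i where i: "i < k" "y = c' (i, 0)" unfolding T_def by auto
      have "(i, 0) \<in> ?V" using i TV unfolding T_def by auto
      then show "y \<in> {..<k}" using cin[of "(i,0)"] i by (simp add: L0_def)
    qed
    have cardT: "card T = k" unfolding T_def by (simp add: card_image inj_on_def)
    have "card (c' ` T) = k" using card_image[OF injT] cardT by simp
    then have cTeq: "c' ` T = {..<k}" using cT by (simp add: card_subset_eq)
    have surj: "\<exists>i<k. c' (i, 0) = y" if "y < k" for y
    proof -
      have "y \<in> c' ` T" using cTeq that by simp
      then show ?thesis unfolding T_def by auto
    qed
    have Q: "c' (k, j) = k + j" if j: "j < k - 1" for j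
    proof -
      have vq: "(k, j) \<in> ?V" using mem j k by simp
      have "c' (k, j) \<in> insert (k + j) {1..<k}" using cin[OF vq] by (simp add: L0_def)
      moreover have "c' (k, j) \<notin> {1..<k}"
      proof
        assume "c' (k, j) \<in> {1..<k}"
        then obtain i where i: "i < k" "c' (i, 0) = c' (k, j)" using surj by auto
        have "(i, 0) \<in> ?V" using mem i by simp
        then show False using cpr[OF _ vq] i by auto
      qed
      ultimately show ?thesis by blast
    qed
    have P1: "c' (i, 1) = i" if i: "1 \<le> i" "i < k" for i
    proof -
      have vp: "(i, 1) \<in> ?V" using mem i by simp
      have "c' (i, 1) \<in> insert i {k..<2*k-1}" using cin[OF vp] i by (simp add: L0_def)
      moreover have "c' (i, 1) \<notin> {k..<2*k-1}"
      proof
        assume a: "c' (i, 1) \<in> {k..<2*k-1}"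
        define j where "j = c' (i, 1) - k"
        have j: "j < k - 1" "c' (i, 1) = k + j" using a by (auto simp: j_def)
        have vq: "(k, j) \<in> ?V" using mem j k by simp
        then show False using cpr[OF vp vq] Q[OF j(1)] j i by auto
      qed
      ultimately show ?thesis by blast
    qed
    have P0: "c' (i, 0) = i" if i: "1 \<le> i" "i < k" for i
    proof -
      obtain i' where i': "i' < k" "c' (i', 0) = i" using surj i by blast
      have vp: "(i, 1) \<in> ?V" using mem i by simp
      have vi': "(i', 0) \<in> ?V" using mem i' by simp
      have "i' = i"
      proof (rule ccontr)
        assume "i' \<noteq> i"
        then show False using cpr[OF vi' vp] i' P1[OF i] by auto
      qed
      then show ?thesis using i' by simp
    qed
    have A: "c' (0, 0) = 0"
    proof (rule ccontr)
      assume ne: "c' (0, 0) \<noteq> 0"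
      have va: "(0, 0) \<in> ?V" using mem k by simp
      have lt: "c' (0, 0) < k" using cin[OF va] k by (simp add: L0_def)
      have vi: "(c' (0, 0), 0) \<in> ?V" using mem lt by simp
      show False using cpr[OF va vi] P0[of "c' (0, 0)"] ne lt by auto
    qed
    show ?thesis
    proof
      fix v assume v: "v \<in> ?V"
      obtain i j where ij: "v = (i, j)" by (cases v)
      have cases: "(i = 0 \<and> j = 0) \<or> (1 \<le> i \<and> i < k \<and> (j = 0 \<or> j = 1)) \<or> (i = k \<and> j < k - 1)"
        using v ij mem[of i j] by (auto split: if_splits)
      then show "c' v = c0 k v"
        using A P0 P1 Q ij k by (auto simp: c0_def)
    qed
  qed
  show ?thesis
    unfolding uniquely_k_list_colorable_def unique_L_coloring_def
    using kl col uniq by blast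
qed

lemma U_mono:
  assumes "uniquely_k_list_colorable V E (Suc j)" and j1: "j \<ge> 1"
  shows "uniquely_k_list_colorable V E j"
proof -
  obtain L where kl: "k_list_assignment V L (Suc j)" and u: "unique_L_coloring V E L"
    using assms by (auto simp: uniquely_k_list_colorable_def)
  obtain c where col: "L_coloring V E L c"
    and un: "\<And>c'. L_coloring V E L c' \<Longrightarrow> (\<forall>v\<in>V. c' v = c v)"
    using u by (auto simp: unique_L_coloring_def)
  define L' where "L' v = L v - {SOME y. y \<in> L v \<and> y \<noteq> c v}" for v
  have ex: "\<exists>y. y \<in> L v \<and> y \<noteq> c v" if v: "v \<in> V" for v
  proof (rule ccontr)
    assume "\<not> ?thesis"
    then have "L v \<subseteq> {c v}" by blast
    then have "card (L v) \<le> card {c v}" by (rule card_mono[rotated]) simp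
    then have "card (L v) \<le> 1" by simp
    then show False using kl v j1 by (simp add: k_list_assignment_def)
  qed
  have kl': "k_list_assignment V L' j"
    unfolding k_list_assignment_def
  proof
    fix v assume v: "v \<in> V"
    have "(SOME y. y \<in> L v \<and> y \<noteq> c v) \<in> L v" using someI_ex[OF ex[OF v]] by blast
    then show "finite (L' v) \<and> card (L' v) = j" using kl v by (simp add: L'_def k_list_assignment_def)
  qed
  have cinL': "c v \<in> L' v" if "v \<in> V" for v
  proof -
    have "(SOME y. y \<in> L v \<and> y \<noteq> c v) \<noteq> c v" using someI_ex[OF ex[OF that]] by blast
    then show ?thesis using col that by (auto simp: L'_def L_coloring_def)
  qed
  have col': "L_coloring V E L' c" using col cinL' by (simp add: L_coloring_def)
  have "\<forall>v\<in>V. c' v = c v" if "L_coloring V E L' c'" for c'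
  proof -
    have "L_coloring V E L c'" using that by (auto simp: L_coloring_def L'_def)
    then show ?thesis using un by blast
  qed
  then show ?thesis using kl' col' unfolding uniquely_k_list_colorable_def unique_L_coloring_def by blast
qed

theorem mainTheorem16:
  fixes k :: nat
  assumes "k \<ge> 2"
  shows "m_number (cmp_V (K_parts k)) (cmp_E (K_parts k)) = k + 1"
proof -
  let ?V = "cmp_V (K_parts k)" and ?E = "cmp_E (K_parts k)"
  have k1: "k \<ge> 1" using assms by simp
  have PM: "property_M ?V ?E (k + 1)"
    unfolding property_M_def uniquely_k_list_colorable_def
  proof
    assume "\<exists>L. k_list_assignment ?V L (k + 1) \<and> unique_L_coloring ?V ?E L"
    then obtain L where "k_list_assignment ?V L (k + 1)" "unique_L_coloring ?V ?E L" by blast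
    moreover have "finite ?V" by (rule card_cmpV(2))
    moreover have "?V \<noteq> {}" using memV[OF k1, of 0 0] by auto
    ultimately have "3 * (k + 1) \<le> card ?V + 2" using uniq_lower by blast
    then show False using card_KV[OF k1] assms by simp
  qed
  have U: "uniquely_k_list_colorable ?V ?E (k - d)" if "d < k" for d
    using that
  proof (induction d)
    case 0 then show ?case using UkLC[OF assms] by simp
  next
    case (Suc d)
    then have "uniquely_k_list_colorable ?V ?E (Suc (k - Suc d))"
      by (metis Suc_diff_Suc Suc_lessD)
    moreover have "k - Suc d \<ge> 1" using Suc.prems by simp
    ultimately show ?case by (rule U_mono)
  qed
  show ?thesis
    unfolding m_number_def
  proof (rule Least_equality)
    show "1 \<le> k + 1 \<and> property_M ?V ?E (k + 1)" using PM by simp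
  next
    fix y assume y: "1 \<le> y \<and> property_M ?V ?E y"
    show "k + 1 \<le> y"
    proof (rule ccontr)
      assume "\<not> k + 1 \<le> y"
      then have "k - (k - y) = y" "k - y < k" using y by auto
      then have "uniquely_k_list_colorable ?V ?E y" using U by metis
      then show False using y by (simp add: property_M_def)
    qed
  qed
qed

end
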